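(* Let $n \ge 2$ and $0 \le s \le 2n-2$. The number of Dyck paths of semilength $n$ in which the sum of the heights of the first peak and the last peak equals $s$ is \[ \sum_{j=1}^{\lfloor s/2\rfloor} (-1)^{j-1}\, j \binom{s-j}{j} C_{n-1-j}, \] where $C_r = \frac{1}{r+1}\binom{2r}{r}$ is the $r$-th Catalan number.
   Context: A Dyck path of semilength $n$ is a lattice path from $(0,0)$ to $(2n,0)$ with steps $U=(1,1)$ and $D=(1,-1)$ never going below the $x$-axis. A peak is an up-step immediately followed by a down-step; its height is the $y$-coordinate at the end of its up-step. If the path has only one peak, that peak is both the first and the last peak. *)

theory Defs
  imports Main
begin

text \<open>A lattice path is encoded as a list of steps: True = U = (1,1), False = D = (1,-1).\<close>

definition height :: "bool list \<Rightarrow> int" where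
  "height xs = int (length (filter id xs)) - int (length (filter Not xs))"

definition dyck_path :: "nat \<Rightarrow> bool list \<Rightarrow> bool" where
  "dyck_path n xs \<longleftrightarrow> length xs = 2 * n \<and> height xs = 0 \<and>
     (\<forall>k \<le> length xs. height (take k xs) \<ge> 0)"

definition peaks :: "bool list \<Rightarrow> nat set" where
  "peaks xs = {i. Suc i < length xs \<and> xs ! i \<and> \<not> xs ! Suc i}"

definition peak_height :: "bool list \<Rightarrow> nat \<Rightarrow> int" where
  "peak_height xs i = height (take (Suc i) xs)"

definition first_peak_height :: "bool list \<Rightarrow> int" where
  "first_peak_height xs = peak_height xs (Min (peaks xs))"

definition last_peak_height :: "bool list \<Rightarrow> int" where
  "last_peak_height xs = peak_height xs (Max (peaks xs))"

definition catalan :: "nat \<Rightarrow> nat" where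
  "catalan r = ((2 * r) choose r) div (r + 1)"

end

theory Submission
  imports Defs
begin



fun W :: "nat \<Rightarrow> nat \<Rightarrow> nat \<Rightarrow> nat" where
  "W 0 p q = (if p = q then 1 else 0)"
| "W (Suc L) p q = W L (Suc p) q + (if p = 0 then 0 else W L (p - 1) q)"

lemma W_last: "W (Suc L) p q = W L p (Suc q) + (if q = 0 then 0 else W L p (q - 1))"
proof (induction L arbitrary: p q)
  case 0
  then show ?case by (cases p; cases q; simp)
next
  case (Suc L)
  have l: "W (Suc (Suc L)) p q = W (Suc L) (Suc p) q + (if p = 0 then 0 else W (Suc L) (p - 1) q)"
    by (rule W.simps(2))
  have r1: "W (Suc L) p (Suc q) = W L (Suc p) (Suc q) + (if p = 0 then 0 else W L (p - 1) (Suc q))"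
    by (rule W.simps(2))
  have r2: "W (Suc L) p (q - 1) = W L (Suc p) (q - 1) + (if p = 0 then 0 else W L (p - 1) (q - 1))"
    by (rule W.simps(2))
  have i1: "W (Suc L) (Suc p) q = W L (Suc p) (Suc q) + (if q = 0 then 0 else W L (Suc p) (q - 1))"
    by (rule Suc.IH)
  have i2: "W (Suc L) (p - 1) q = W L (p - 1) (Suc q) + (if q = 0 then 0 else W L (p - 1) (q - 1))"
    by (rule Suc.IH)
  show ?case
    by (simp only: l r1 r2 i1 i2) simp
qed




definition cc :: "nat \<Rightarrow> int \<Rightarrow> int" where
  "cc L k = (if 0 \<le> k then int (L choose nat k) else 0)"

lemma cc_Suc: "cc (Suc L) k = cc L (k - 1) + cc L k"
  unfolding cc_def
  apply (cases "k \<le> 0")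
  apply (cases "k = 0"; simp)
  apply (subgoal_tac "nat k = Suc (nat (k - 1))")
  apply simp
  apply simp
  done

lemma cc_0: "cc 0 k = (if k = 0 then 1 else 0)"
  unfolding cc_def by simp




lemma W_closed:
  "even (int L + int q - int p) \<Longrightarrow>
   int (W L p q) = cc L ((int L + int q - int p) div 2) - cc L ((int L + int q - int p) div 2 + int p + 1)"
proof (induction L arbitrary: p)
  case 0
  then have e: "int q - int p = 2 * ((int q - int p) div 2)" by (simp add: even_two_times_div_two)
  show ?case
  proof (cases "p = q")
    case True then show ?thesis by (simp add: cc_0)
  next
    case False
    then have "(int q - int p) div 2 \<noteq> 0" using e by auto
    then show ?thesis using False by (simp add: cc_0)
  qed
next
  case (Suc L)
  define u where "u = (int (Suc L) + int q - int p) div 2"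
  have u2: "int (Suc L) + int q - int p = 2 * u" using Suc.prems unfolding u_def by (simp add: even_two_times_div_two)
  have A: "int (W L (Suc p) q) = cc L (u - 1) - cc L (u + int p + 1)"
  proof -
    have e: "even (int L + int q - int (Suc p))" using u2 by presburger
    have h: "(int L + int q - int (Suc p)) div 2 = u - 1" using u2 by simp
    have h2: "u - 1 + int (Suc p) + 1 = u + int p + 1" by simp
    show ?thesis using Suc.IH[of "Suc p", OF e] unfolding h h2 .
  qed
  show ?case
  proof (cases p)
    case 0
    then show ?thesis using A u2 cc_Suc[of L u] cc_Suc[of L "u+1"]
      unfolding u_def[symmetric] by simp
  next
    case (Suc p')
    have e: "even (int L + int q - int p')" using u2 Suc by presburger
    have h: "(int L + int q - int p') div 2 = u" using u2 Suc by simp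
    have h2: "u + int p' + 1 = u + int p" using Suc by simp
    have B: "int (W L p' q) = cc L u - cc L (u + int p)"
      using Suc.IH[of p', OF e] unfolding h h2 .
    show ?thesis using A B Suc cc_Suc[of L u] cc_Suc[of L "u + int p + 1"]
      unfolding u_def[symmetric] by (simp add: ac_simps)
  qed
qed




lemma W_cat: "W (2 * r) 0 0 = catalan r"
proof -
  have "int (W (2*r) 0 0) = cc (2*r) (int r) - cc (2*r) (int r + 1)"
    using W_closed[of "2*r" 0 0] by simp
  also have "\<dots> = int ((2*r) choose r) - int ((2*r) choose (Suc r))"
  proof -
    have "nat (int r + 1) = Suc r" by simp
    then show ?thesis unfolding cc_def by simp
  qed
  finally have 1: "int (W (2*r) 0 0) = int ((2*r) choose r) - int ((2*r) choose (Suc r))" .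
  define C where "C = (2*r) choose r"
  define D where "D = (2*r) choose (Suc r)"
  have 2: "D * Suc r = C * r"
  proof (cases r)
    case 0 then show ?thesis unfolding C_def D_def by simp
  next
    case (Suc r')
    have "2 * r = Suc (Suc r' + r')" using Suc by simp
    then show ?thesis unfolding C_def D_def using Suc_times_binomial_add[of "Suc r'" r'] Suc
      by (simp only: mult.commute)
  qed
  have "(C - D) * Suc r = C"
  proof -
    have "(C - D) * Suc r = C * Suc r - D * Suc r" by (rule diff_mult_distrib)
    also have "\<dots> = C" using 2 by simp
    finally show ?thesis .
  qed
  then have "C div Suc r = C - D" by (metis nonzero_mult_div_cancel_right nat.distinct(1))
  then have "catalan r = C - D" unfolding catalan_def C_def by simp
  moreover have "D \<le> C"
  proof -
    have "D * Suc r \<le> C * Suc r" using 2 by simp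
    then show ?thesis by (simp only: mult_le_cancel2)
  qed
  ultimately show ?thesis using 1 unfolding C_def D_def by simp
qed





definition e :: "nat \<Rightarrow> nat \<Rightarrow> int" where
  "e p i = (-1) ^ i * int ((p - i) choose i)"

lemma e_0 [simp]: "e p 0 = 1" unfolding e_def by simp

lemma e_over: "i > p \<Longrightarrow> e p i = 0" unfolding e_def by simp

lemma e_1_1 [simp]: "e (Suc 0) (Suc 0) = 0" unfolding e_def by simp

lemma e_rec: "e (Suc (Suc p)) (Suc k) = e (Suc p) (Suc k) - e p k"
proof (cases "k \<le> p")
  case True
  then have "Suc (Suc p) - Suc k = Suc (Suc p - Suc k)" by simp
  then have "(Suc (Suc p) - Suc k) choose Suc k = ((Suc p - Suc k) choose Suc k) + ((Suc p - Suc k) choose k)"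
    by simp
  moreover have "Suc p - Suc k = p - k" by simp
  ultimately show ?thesis unfolding e_def by (simp add: algebra_simps)
next
  case False
  then show ?thesis unfolding e_def by simp
qed

lemma cheb_sum:
  fixes f :: "nat \<Rightarrow> int"
  shows "(\<Sum>k\<le>Suc (Suc p). e (Suc (Suc p)) k * f k)
       = (\<Sum>k\<le>Suc p. e (Suc p) k * f k) - (\<Sum>k\<le>p. e p k * f (Suc k))"
proof -
  have "(\<Sum>k\<le>Suc (Suc p). e (Suc (Suc p)) k * f k)
      = f 0 + (\<Sum>k\<le>Suc p. e (Suc (Suc p)) (Suc k) * f (Suc k))"
    by (simp only: sum.atMost_Suc_shift e_0 mult_1)
  also have "\<dots> = f 0 + (\<Sum>k\<le>Suc p. e (Suc p) (Suc k) * f (Suc k))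
                  - (\<Sum>k\<le>Suc p. e p k * f (Suc k))"
    by (simp add: e_rec algebra_simps sum_subtractf)
  also have "f 0 + (\<Sum>k\<le>Suc p. e (Suc p) (Suc k) * f (Suc k)) = (\<Sum>k\<le>Suc (Suc p). e (Suc p) k * f k)"
    by (simp only: sum.atMost_Suc_shift e_0 mult_1)
  also have "\<dots> = (\<Sum>k\<le>Suc p. e (Suc p) k * f k)"
    by (simp add: e_over)
  also have "(\<Sum>k\<le>Suc p. e p k * f (Suc k)) = (\<Sum>k\<le>p. e p k * f (Suc k))"
    by (simp add: e_over)
  finally show ?thesis .
qed

definition Cat :: "nat \<Rightarrow> int" where "Cat r = int (catalan r)"

definition Psi :: "nat \<Rightarrow> nat \<Rightarrow> nat \<Rightarrow> int" where
  "Psi N p q = (\<Sum>i\<le>p. e p i * (\<Sum>k\<le>q. e q k * Cat (N - i - k)))"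

lemma Psi_0: "Psi N 0 q = (\<Sum>k\<le>q. e q k * Cat (N - k))"
  unfolding Psi_def by simp

lemma W_0q: "even (L + q) \<Longrightarrow> int (W L 0 q) = Psi ((L + q) div 2) 0 q"
proof (induction q arbitrary: L rule: less_induct)
  case (less q)
  show ?case
  proof (cases q)
    case 0
    then obtain r where "L = 2 * r" using less.prems by (auto elim!: evenE)
    then show ?thesis using 0 W_cat[of r] by (simp add: Psi_0 Cat_def)
  next
    case (Suc q')
    show ?thesis
    proof (cases q')
      case 0
      have "even (Suc L)" using less.prems Suc 0 by simp
      then obtain r where r: "Suc L = 2 * r" by (rule evenE)
      have "W L 0 1 = W (Suc L) 0 0" using W_last[of L 0 0] by simp
      moreover have "(L + 1) div 2 = r" using r by simp
      ultimately show ?thesis using Suc 0 W_cat[of r] r by (simp add: Psi_0 Cat_def)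
    next
      case (Suc q'')
      note qq = \<open>q = Suc q'\<close> Suc
      have w: "int (W L 0 q) = int (W (Suc L) 0 (Suc q'')) - int (W L 0 q'')"
        using W_last[of L 0 "Suc q''"] qq by simp
      define N where "N = (L + q) div 2"
      have h1: "(Suc L + Suc q'') div 2 = N" unfolding N_def using qq by simp
      have h2: "(L + q'') div 2 = N - 1" unfolding N_def using qq by simp
      have ev1: "even (Suc L + Suc q'')" using less.prems qq by simp
      have ev2: "even (L + q'')" using less.prems qq by simp
      have "int (W L 0 q) = Psi N 0 (Suc q'') - Psi (N - 1) 0 q''"
        using w less.IH[of "Suc q''", OF _ ev1] less.IH[of q'', OF _ ev2] qq h1 h2 by simp
      also have "\<dots> = Psi N 0 q"
      proof -
        have c: "(\<Sum>k\<le>q''. e q'' k * Cat (N - Suc k)) = (\<Sum>k\<le>q''. e q'' k * Cat (N - 1 - k))"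
          by (rule sum.cong) auto
        show ?thesis
          unfolding Psi_0 qq cheb_sum[of q'' "\<lambda>k. Cat (N - k)"] c ..
      qed
      finally show ?thesis unfolding N_def .
    qed
  qed
qed

lemma Psi_1: "Psi N (Suc 0) q = Psi N 0 q"
  unfolding Psi_def by (simp add: e_over)

lemma Psi_rec: "Psi N (Suc (Suc p)) q = Psi N (Suc p) q - Psi (N - 1) p q"
proof -
  have "Psi N (Suc (Suc p)) q = (\<Sum>i\<le>Suc p. e (Suc p) i * (\<Sum>k\<le>q. e q k * Cat (N - i - k)))
     - (\<Sum>i\<le>p. e p i * (\<Sum>k\<le>q. e q k * Cat (N - Suc i - k)))"
    unfolding Psi_def by (rule cheb_sum)
  moreover have "(\<Sum>i\<le>p. e p i * (\<Sum>k\<le>q. e q k * Cat (N - Suc i - k))) = Psi (N - 1) p q"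
    unfolding Psi_def by (simp only: diff_Suc_eq_diff_pred)
  ultimately show ?thesis unfolding Psi_def by simp
qed

lemma W_Psi: "even (L + p + q) \<Longrightarrow> int (W L p q) = Psi ((L + p + q) div 2) p q"
proof (induction p arbitrary: L rule: less_induct)
  case (less p)
  show ?case
  proof (cases p)
    case 0
    then show ?thesis using W_0q less.prems by simp
  next
    case (Suc p')
    show ?thesis
    proof (cases p')
      case 0
      have "W L 1 q = W (Suc L) 0 q" by simp
      then show ?thesis using W_0q[of "Suc L" q] less.prems Suc 0 by (simp add: Psi_1)
    next
      case (Suc p'')
      note pp = \<open>p = Suc p'\<close> Suc
      have w: "int (W L p q) = int (W (Suc L) (Suc p'') q) - int (W L p'' q)"
        using pp by simp
      define N where "N = (L + p + q) div 2"
      have h1: "(Suc L + Suc p'' + q) div 2 = N" unfolding N_def using pp by simp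
      have h2: "(L + p'' + q) div 2 = N - 1" unfolding N_def using pp by simp
      have ev1: "even (Suc L + Suc p'' + q)" using less.prems pp by simp
      have ev2: "even (L + p'' + q)" using less.prems pp by simp
      have "int (W L p q) = Psi N (Suc p'') q - Psi (N - 1) p'' q"
        using w less.IH[of "Suc p''", OF _ ev1] less.IH[of p'', OF _ ev2] pp h1 h2 by simp
      also have "\<dots> = Psi N p q" using Psi_rec pp by simp
      finally show ?thesis unfolding N_def .
    qed
  qed
qed




lemma vander_upper: "(\<Sum>m\<le>M. (m choose a) * ((M - m) choose b)) = Suc M choose (a + b + 1)"
proof (induction M arbitrary: b)
  case 0
  then show ?case by (cases a; cases b; simp)
next
  case (Suc M)
  show ?case
  proof (cases b)
    case 0
    then show ?thesis using sum_choose_upper[of a "Suc M"] by simp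
  next
    case (Suc b')
    have "(\<Sum>m\<le>Suc M. (m choose a) * ((Suc M - m) choose b))
        = (\<Sum>m\<le>M. (m choose a) * ((Suc M - m) choose b))"
      using Suc by simp
    also have "\<dots> = (\<Sum>m\<le>M. (m choose a) * ((M - m) choose b) + (m choose a) * ((M - m) choose b'))"
    proof (rule sum.cong)
      fix m assume "m \<in> {..M}"
      then have "Suc M - m = Suc (M - m)" by auto
      then show "(m choose a) * ((Suc M - m) choose b) = (m choose a) * ((M - m) choose b) + (m choose a) * ((M - m) choose b')"
        using Suc by (simp add: algebra_simps)
    qed simp
    also have "\<dots> = (Suc M choose (a + b + 1)) + (Suc M choose (a + b' + 1))"
      by (simp add: sum.distrib Suc.IH)
    also have "\<dots> = Suc (Suc M) choose (a + b + 1)"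
      using Suc by simp
    finally show ?thesis .
  qed
qed

lemma vander_shift:
  "(\<Sum>p\<le>N. ((p - i) choose i) * ((N - p - k) choose k)) = (Suc N - (i + k)) choose (i + k + 1)"
proof (cases "i + k \<le> N")
  case True
  define M where "M = N - i - k"
  have "(\<Sum>p\<le>N. ((p - i) choose i) * ((N - p - k) choose k))
      = (\<Sum>p\<in>{i..N-k}. ((p - i) choose i) * ((N - p - k) choose k))"
  proof (rule sum.mono_neutral_right)
    show "\<forall>p\<in>{..N} - {i..N - k}. (p - i choose i) * (N - p - k choose k) = 0"
    proof
      fix p assume "p \<in> {..N} - {i..N - k}"
      then have "p \<le> N" "p < i \<or> p > N - k" by auto
      then show "(p - i choose i) * (N - p - k choose k) = 0"
        by auto
    qed
  qed auto
  also have "\<dots> = (\<Sum>m\<le>M. (m choose i) * ((M - m) choose k))"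
  proof -
    have "(\<Sum>m\<le>M. (m choose i) * ((M - m) choose k))
        = (\<Sum>p\<in>(\<lambda>m. m + i) ` {..M}. ((p - i) choose i) * ((N - p - k) choose k))"
      by (subst sum.reindex) (auto simp: inj_on_def M_def add.commute add.left_commute intro!: sum.cong)
    moreover have "(\<lambda>m. m + i) ` {..M} = {i..N-k}"
    proof
      show "(\<lambda>m. m + i) ` {..M} \<subseteq> {i..N - k}" unfolding M_def using True by auto
      show "{i..N - k} \<subseteq> (\<lambda>m. m + i) ` {..M}"
      proof
        fix p assume "p \<in> {i..N-k}"
        then have "p = (p - i) + i" "p - i \<in> {..M}" unfolding M_def by auto
        then show "p \<in> (\<lambda>m. m + i) ` {..M}" by blast
      qed
    qed
    ultimately show ?thesis by simp
  qed
  also have "\<dots> = Suc M choose (i + k + 1)" by (rule vander_upper)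
  also have "Suc M = Suc N - (i + k)" unfolding M_def using True by simp
  finally show ?thesis .
next
  case False
  have "(\<Sum>p\<le>N. ((p - i) choose i) * ((N - p - k) choose k)) = 0"
  proof (rule sum.neutral, rule ballI)
    fix p assume "p \<in> {..N}"
    then have "p < i \<or> N - p < k" using False by auto
    then show "(p - i choose i) * (N - p - k choose k) = 0" using \<open>p \<in> {..N}\<close> by auto
  qed
  moreover have "Suc N - (i + k) choose (i + k + 1) = 0" by (rule binomial_eq_0) (use False in simp)
  ultimately show ?thesis by (simp only:)
qed




lemma sq_tri:
  fixes h :: "nat \<Rightarrow> int"
  assumes "\<forall>J>N. h J = 0"
  shows "(\<Sum>i\<le>N. \<Sum>k\<le>N. h (i + k)) = (\<Sum>J\<le>N. of_nat (J + 1) * h J)"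
proof -
  have "(\<Sum>i\<le>N. \<Sum>k\<le>N. h (i + k)) = (\<Sum>(i,k)\<in>{..N} \<times> {..N}. h (i + k))"
    by (rule sum.cartesian_product)
  also have "\<dots> = (\<Sum>(i,k)\<in>{(i,k). i + k \<le> N}. h (i + k))"
  proof (rule sum.mono_neutral_right)
    show "finite ({..N} \<times> {..N})" by simp
    show "{(i, k). i + k \<le> N} \<subseteq> {..N} \<times> {..N}" by auto
    show "\<forall>x\<in>{..N} \<times> {..N} - {(i, k). i + k \<le> N}. (case x of (i, k) \<Rightarrow> h (i + k)) = 0"
    proof
      fix x assume "x \<in> {..N} \<times> {..N} - {(i, k). i + k \<le> N}"
      then obtain i k where "x = (i, k)" "i + k > N" by auto
      then show "(case x of (i, k) \<Rightarrow> h (i + k)) = 0" using assms by simp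
    qed
  qed
  also have "\<dots> = (\<Sum>J\<le>N. \<Sum>i\<le>J. h (i + (J - i)))"
    by (rule sum.triangle_reindex_eq)
  also have "\<dots> = (\<Sum>J\<le>N. of_nat (J + 1) * h J)"
    by (rule sum.cong) auto
  finally show ?thesis .
qed

lemma e_prod_sum:
  "(\<Sum>p\<le>N. e p i * e (N - p) k) = (-1) ^ (i + k) * int ((Suc N - (i + k)) choose (i + k + 1))"
proof -
  have "(\<Sum>p\<le>N. e p i * e (N - p) k) = (\<Sum>p\<le>N. (-1) ^ (i + k) * int (((p - i) choose i) * ((N - p - k) choose k)))"
    unfolding e_def by (rule sum.cong) (auto simp: power_add)
  also have "\<dots> = (-1) ^ (i + k) * int (\<Sum>p\<le>N. ((p - i) choose i) * ((N - p - k) choose k))"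
    by (simp add: sum_distrib_left)
  also have "\<dots> = (-1) ^ (i + k) * int ((Suc N - (i + k)) choose (i + k + 1))"
    by (simp only: vander_shift)
  finally show ?thesis .
qed

lemma Psi_ext:
  assumes "p \<le> N"
  shows "Psi m p (N - p) = (\<Sum>i\<le>N. \<Sum>k\<le>N. e p i * e (N - p) k * Cat (m - i - k))"
proof -
  have inner: "(\<Sum>k\<le>N - p. e (N - p) k * Cat (m - i - k)) = (\<Sum>k\<le>N. e (N - p) k * Cat (m - i - k))" for i
    by (rule sum.mono_neutral_left) (auto simp: e_over)
  have "Psi m p (N - p) = (\<Sum>i\<le>p. e p i * (\<Sum>k\<le>N. e (N - p) k * Cat (m - i - k)))"
    unfolding Psi_def inner ..
  also have "\<dots> = (\<Sum>i\<le>N. e p i * (\<Sum>k\<le>N. e (N - p) k * Cat (m - i - k)))"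
    by (rule sum.mono_neutral_left) (use assms in \<open>auto simp: e_over\<close>)
  also have "\<dots> = (\<Sum>i\<le>N. \<Sum>k\<le>N. e p i * e (N - p) k * Cat (m - i - k))"
    by (simp add: sum_distrib_left mult.assoc)
  finally show ?thesis .
qed

lemma alg_main:
  fixes N m :: nat
  shows "(\<Sum>p\<le>N. Psi m p (N - p))
       = (\<Sum>J\<le>N. of_nat (J + 1) * ((-1) ^ J * int ((Suc N - J) choose (J + 1)) * Cat (m - J)))"
proof -
  define h where "h J = (-1) ^ J * int ((Suc N - J) choose (J + 1)) * Cat (m - J)" for J
  have "(\<Sum>p\<le>N. Psi m p (N - p)) = (\<Sum>p\<le>N. \<Sum>i\<le>N. \<Sum>k\<le>N. e p i * e (N - p) k * Cat (m - i - k))"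
    by (rule sum.cong) (auto simp: Psi_ext)
  also have "\<dots> = (\<Sum>i\<le>N. \<Sum>p\<le>N. \<Sum>k\<le>N. e p i * e (N - p) k * Cat (m - i - k))"
    by (rule sum.swap)
  also have "\<dots> = (\<Sum>i\<le>N. \<Sum>k\<le>N. \<Sum>p\<le>N. e p i * e (N - p) k * Cat (m - i - k))"
    by (rule sum.cong[OF refl], rule sum.swap)
  also have "\<dots> = (\<Sum>i\<le>N. \<Sum>k\<le>N. (\<Sum>p\<le>N. e p i * e (N - p) k) * Cat (m - i - k))"
    by (simp add: sum_distrib_right)
  also have "\<dots> = (\<Sum>i\<le>N. \<Sum>k\<le>N. h (i + k))"
    unfolding e_prod_sum h_def by (simp add: diff_diff_add)
  also have "\<dots> = (\<Sum>J\<le>N. of_nat (J + 1) * h J)"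
    by (rule sq_tri) (auto simp: h_def)
  finally show ?thesis unfolding h_def .
qed




lemma alg_final:
  fixes n s :: nat
  assumes "n \<ge> 2" and "s \<le> 2 * n - 2"
  shows "int (\<Sum>a\<in>{1..<s}. W (2 * n - s - 2) (a - 1) (s - a - 1))
         = (\<Sum>j = 1..s div 2. (-1) ^ (j - 1) * int j * int ((s - j) choose j)
                               * int (catalan (n - 1 - j)))"
proof (cases "s < 2")
  case True
  then have "s div 2 = 0" "{1..<s} = {}" by auto
  then show ?thesis by simp
next
  case False
  define N where "N = s - 2"
  define m where "m = n - 2"
  have sN: "s = Suc (Suc N)" unfolding N_def using False by simp
  have "int (\<Sum>a\<in>{1..<s}. W (2 * n - s - 2) (a - 1) (s - a - 1))
      = (\<Sum>a\<in>{1..<s}. Psi m (a - 1) (s - a - 1))"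
    unfolding of_nat_sum
  proof (rule sum.cong[OF refl])
    fix a assume a: "a \<in> {1..<s}"
    have ev: "even (2 * n - s - 2 + (a - 1) + (s - a - 1))"
      using a assms by (simp add: algebra_simps) presburger
    have d: "(2 * n - s - 2 + (a - 1) + (s - a - 1)) div 2 = m"
      using a assms unfolding m_def by simp
    show "int (W (2 * n - s - 2) (a - 1) (s - a - 1)) = Psi m (a - 1) (s - a - 1)"
      using W_Psi[OF ev] d by simp
  qed
  also have "\<dots> = (\<Sum>p\<le>N. Psi m p (N - p))"
  proof -
    have "{1..<s} = Suc ` {..N}" unfolding sN image_Suc_atMost by auto
    then show ?thesis by (simp add: sum.reindex sN)
  qed
  also have "\<dots> = (\<Sum>J\<le>N. of_nat (J + 1) * ((-1) ^ J * int ((Suc N - J) choose (J + 1)) * Cat (m - J)))"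
    by (rule alg_main)
  also have "\<dots> = (\<Sum>j = 1..Suc N. (-1) ^ (j - 1) * int j * int ((s - j) choose j)
                               * int (catalan (n - 1 - j)))"
  proof -
    have "{1..Suc N} = Suc ` {..N}" unfolding image_Suc_atMost by auto
    moreover have "n - 1 - Suc J = m - J" for J unfolding m_def by simp
    ultimately show ?thesis by (simp add: sum.reindex sN Cat_def algebra_simps)
  qed
  also have "\<dots> = (\<Sum>j = 1..s div 2. (-1) ^ (j - 1) * int j * int ((s - j) choose j)
                               * int (catalan (n - 1 - j)))"
  proof (rule sum.mono_neutral_right)
    show "{1..s div 2} \<subseteq> {1..Suc N}" unfolding sN by auto
    show "\<forall>j\<in>{1..Suc N} - {1..s div 2}. (-1) ^ (j - 1) * int j * int ((s - j) choose j) * int (catalan (n - 1 - j)) = 0"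
    proof
      fix j assume "j \<in> {1..Suc N} - {1..s div 2}"
      then have "s - j < j" by auto
      then show "(-1) ^ (j - 1) * int j * int ((s - j) choose j) * int (catalan (n - 1 - j)) = 0" by simp
    qed
  qed simp
  finally show ?thesis .
qed




lemma height_Nil [simp]: "height [] = 0" unfolding height_def by simp
lemma height_Cons [simp]: "height (x # xs) = (if x then 1 else -1) + height xs"
  unfolding height_def by auto
lemma height_append [simp]: "height (xs @ ys) = height xs + height ys"
  unfolding height_def by simp
lemma height_rep_True [simp]: "height (replicate a True) = int a"
  by (induction a) auto
lemma height_rep_False [simp]: "height (replicate a False) = - int a"
  by (induction a) auto

fun nn :: "int \<Rightarrow> bool list \<Rightarrow> bool" where
  "nn h [] = (0 \<le> h)"
| "nn h (x # xs) = (0 \<le> h \<and> nn (h + (if x then 1 else -1)) xs)"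

lemma nn_iff: "nn h xs = (\<forall>k \<le> length xs. 0 \<le> h + height (take k xs))"
proof (induction xs arbitrary: h)
  case Nil
  then show ?case by simp
next
  case (Cons x xs)
  show ?case
  proof
    assume A: "nn h (x # xs)"
    show "\<forall>k\<le>length (x # xs). 0 \<le> h + height (take k (x # xs))"
    proof (intro allI impI)
      fix k assume "k \<le> length (x # xs)"
      then show "0 \<le> h + height (take k (x # xs))"
        using A Cons.IH by (cases k) (auto simp: algebra_simps)
    qed
  next
    assume B: "\<forall>k\<le>length (x # xs). 0 \<le> h + height (take k (x # xs))"
    have "0 \<le> h" using B[rule_format, of 0] by simp
    moreover have "\<forall>k\<le>length xs. 0 \<le> (h + (if x then 1 else -1)) + height (take k xs)"
    proof (intro allI impI)
      fix k assume "k \<le> length xs"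
      then show "0 \<le> (h + (if x then 1 else -1)) + height (take k xs)"
        using B[rule_format, of "Suc k"] by (simp add: algebra_simps)
    qed
    ultimately show "nn h (x # xs)" using Cons.IH by simp
  qed
qed

lemma nn_append: "nn h (xs @ ys) = (nn h xs \<and> nn (h + height xs) ys)"
proof (induction xs arbitrary: h)
  case Nil
  then show ?case by (cases ys) auto
next
  case (Cons x xs)
  then show ?case by (simp add: algebra_simps)
qed

lemma nn_nonneg: "nn h xs \<Longrightarrow> 0 \<le> h"
  by (cases xs) auto

lemma nn_end: "nn h xs \<Longrightarrow> 0 \<le> h + height xs"
proof (induction xs arbitrary: h)
  case Nil
  then show ?case by simp
next
  case (Cons x xs)
  then have "0 \<le> (h + (if x then 1 else -1)) + height xs" by simp
  then show ?case by simp
qed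

lemma nn_rep_True: "0 \<le> h \<Longrightarrow> nn h (replicate a True)"
  by (induction a arbitrary: h) auto

lemma nn_rep_False: "nn h (replicate b False) = (int b \<le> h)"
  by (induction b arbitrary: h) auto

lemma dyck_iff: "dyck_path n xs = (length xs = 2 * n \<and> height xs = 0 \<and> nn 0 xs)"
  unfolding dyck_path_def nn_iff by simp

definition NP :: "nat \<Rightarrow> nat \<Rightarrow> nat \<Rightarrow> bool list set" where
  "NP L p q = {ys. length ys = L \<and> nn (int p) ys \<and> int p + height ys = int q}"

lemma NP_finite: "finite (NP L p q)"
proof (rule finite_subset)
  show "NP L p q \<subseteq> {xs. set xs \<subseteq> UNIV \<and> length xs = L}" unfolding NP_def by auto
  show "finite {xs. set xs \<subseteq> (UNIV :: bool set) \<and> length xs = L}"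
    by (rule finite_lists_length_eq) simp
qed

lemma NP_0: "NP 0 p q = (if p = q then {[]} else {})"
  unfolding NP_def by auto

lemma NP_Suc: "NP (Suc L) p q = Cons True ` NP L (Suc p) q \<union> (if p = 0 then {} else Cons False ` NP L (p - 1) q)"
proof (rule set_eqI)
  fix ys
  show "ys \<in> NP (Suc L) p q \<longleftrightarrow> ys \<in> Cons True ` NP L (Suc p) q \<union> (if p = 0 then {} else Cons False ` NP L (p - 1) q)"
  proof (cases ys)
    case Nil
    then show ?thesis unfolding NP_def by auto
  next
    case (Cons x ys')
    show ?thesis
    proof (cases x)
      case True
      then show ?thesis using Cons unfolding NP_def by (auto simp: algebra_simps nn_nonneg)
    next
      case False
      show ?thesis
      proof (cases "p = 0")
        case True
        then show ?thesis using Cons False unfolding NP_def by (auto dest: nn_nonneg)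
      next
        case p: False
        then have "int (p - 1) = int p - 1" by simp
        then show ?thesis using Cons False p unfolding NP_def by (auto simp: algebra_simps)
      qed
    qed
  qed
qed

lemma card_NP: "card (NP L p q) = W L p q"
proof (induction L arbitrary: p)
  case 0
  then show ?case by (simp add: NP_0)
next
  case (Suc L)
  have d: "Cons True ` NP L (Suc p) q \<inter> Cons False ` NP L (p - 1) q = {}" by auto
  have c1: "card (Cons True ` NP L (Suc p) q) = W L (Suc p) q"
    by (simp add: card_image Suc.IH)
  have c2: "card (Cons False ` NP L (p - 1) q) = W L (p - 1) q"
    by (simp add: card_image Suc.IH)
  show ?case
  proof (cases "p = 0")
    case True
    then show ?thesis unfolding NP_Suc using c1 by simp
  next
    case False
    then show ?thesis unfolding NP_Suc using c1 c2 d
      by (simp add: card_Un_disjoint NP_finite)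
  qed
qed




lemma peaks_finite: "finite (peaks xs)"
  unfolding peaks_def by (rule finite_subset[of _ "{..<length xs}"]) auto

lemma first_peak:
  assumes xs: "xs = replicate a True @ False # r" and a: "a \<ge> 1"
  shows "first_peak_height xs = int a"
proof -
  have nth1: "xs ! i = True" if "i < a" for i
    using that xs by (simp add: nth_append)
  have nth2: "xs ! a = False" using xs by (simp add: nth_append)
  have len: "a < length xs" using xs by simp
  have "Min (peaks xs) = a - 1"
  proof (rule Min_eqI)
    show "finite (peaks xs)" by (rule peaks_finite)
    show "a - 1 \<in> peaks xs" unfolding peaks_def using a len nth1[of "a - 1"] nth2 by simp
    fix i assume "i \<in> peaks xs"
    then have "\<not> xs ! Suc i" unfolding peaks_def by simp
    then show "a - 1 \<le> i" using nth1[of "Suc i"] by (cases "Suc i < a") auto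
  qed
  moreover have "take a xs = replicate a True" using xs by simp
  ultimately show ?thesis unfolding first_peak_height_def peak_height_def using a by simp
qed

lemma last_peak:
  assumes xs: "xs = r @ True # replicate b False" and b: "b \<ge> 1"
  shows "last_peak_height xs = height xs + int b"
proof -
  have nth1: "xs ! i = False" if "i > length r" "i < length xs" for i
    using that xs by (simp add: nth_append)
  have nth2: "xs ! length r = True" using xs by (simp add: nth_append)
  have len: "Suc (length r) < length xs" using xs b by simp
  have "Max (peaks xs) = length r"
  proof (rule Max_eqI)
    show "finite (peaks xs)" by (rule peaks_finite)
    show "length r \<in> peaks xs" unfolding peaks_def using len nth1[of "Suc (length r)"] nth2 by simp
    fix i assume "i \<in> peaks xs"
    then have "xs ! i" "i < length xs" unfolding peaks_def by auto
    then show "i \<le> length r" using nth1[of i] by (cases "i > length r") auto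
  qed
  moreover have "take (Suc (length r)) xs = r @ [True]" using xs by simp
  ultimately show ?thesis unfolding last_peak_height_def peak_height_def using xs by simp
qed

definition T :: "nat \<Rightarrow> nat \<Rightarrow> nat \<Rightarrow> bool list set" where
  "T n s a = (\<lambda>M. replicate a True @ False # M @ True # replicate (s - a) False)
              ` NP (2 * n - s - 2) (a - 1) (s - a - 1)"

lemma T_sub:
  assumes "n \<ge> 2" "s \<le> 2 * n - 2" "a \<in> {1..<s}" "xs \<in> T n s a"
  shows "dyck_path n xs \<and> first_peak_height xs + last_peak_height xs = int s"
proof -
  obtain M where xs: "xs = replicate a True @ False # M @ True # replicate (s - a) False"
    and M: "M \<in> NP (2 * n - s - 2) (a - 1) (s - a - 1)"
    using assms(4) unfolding T_def by auto
  have a1: "a \<ge> 1" "a < s" using assms(3) by auto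
  have lenM: "length M = 2 * n - s - 2" and nnM: "nn (int a - 1) M"
    and hM: "int a - 1 + height M = int (s - a) - 1"
    using M a1 unfolding NP_def by auto
  have len: "length xs = 2 * n" using xs lenM assms(1,2) a1 by simp
  have h: "height xs = 0" using xs hM a1 by simp
  have nn1: "nn (int a - 1) (M @ True # replicate (s - a) False)"
    unfolding nn_append using nnM hM a1 by (simp add: nn_rep_False algebra_simps nn_nonneg)
  have nn: "nn 0 xs"
    unfolding xs nn_append using nn1 by (simp add: nn_rep_True)
  have f: "first_peak_height xs = int a" using first_peak[OF xs a1(1)] .
  have "xs = (replicate a True @ False # M) @ True # replicate (s - a) False" using xs by simp
  from last_peak[OF this] have l: "last_peak_height xs = int (s - a)" using h a1 by simp
  show ?thesis using len h nn f l a1 unfolding dyck_iff by simp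
qed

lemma T_disj:
  assumes "n \<ge> 2" "s \<le> 2 * n - 2" "a \<in> {1..<s}" "a' \<in> {1..<s}" "a \<noteq> a'"
  shows "T n s a \<inter> T n s a' = {}"
proof (rule ccontr)
  assume "T n s a \<inter> T n s a' \<noteq> {}"
  then obtain xs where x1: "xs \<in> T n s a" and x2: "xs \<in> T n s a'" by auto
  from x1 obtain M where e1: "xs = replicate a True @ False # (M @ True # replicate (s - a) False)"
    unfolding T_def by auto
  from x2 obtain M' where e2: "xs = replicate a' True @ False # (M' @ True # replicate (s - a') False)"
    unfolding T_def by auto
  have "first_peak_height xs = int a" using first_peak[OF e1] assms(3) by simp
  moreover have "first_peak_height xs = int a'" using first_peak[OF e2] assms(4) by simp
  ultimately have "first_peak_height xs = int a" "first_peak_height xs = int a'" by auto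
  then show False using assms(5) by simp
qed

lemma card_T:
  "card (T n s a) = W (2 * n - s - 2) (a - 1) (s - a - 1)"
proof -
  have "inj_on (\<lambda>M. replicate a True @ False # M @ True # replicate (s - a) False) X" for X
    by (rule inj_onI) simp
  then show ?thesis unfolding T_def by (simp add: card_image card_NP)
qed




lemma S_sub:
  assumes n: "n \<ge> 2" and s: "s \<le> 2 * n - 2"
    and d: "dyck_path n xs" and fl: "first_peak_height xs + last_peak_height xs = int s"
  shows "\<exists>a\<in>{1..<s}. xs \<in> T n s a"
proof -
  have len: "length xs = 2 * n" and h0: "height xs = 0" and nn0: "nn 0 xs"
    using d unfolding dyck_iff by auto
  define a where "a = length (takeWhile id xs)"
  have tw: "takeWhile id xs = replicate a True"
    unfolding a_def by (rule replicate_eqI) (auto dest: set_takeWhileD)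
  have dwne: "dropWhile id xs \<noteq> []"
  proof
    assume e: "dropWhile id xs = []"
    have "xs = takeWhile id xs @ dropWhile id xs" by (rule takeWhile_dropWhile_id[symmetric])
    also have "\<dots> = replicate a True" by (simp only: e tw append_Nil2)
    finally have "xs = replicate a True" .
    then show False using h0 len n by simp
  qed
  then obtain r1 where r1: "dropWhile id xs = False # r1"
    using hd_dropWhile[OF dwne] by (cases "dropWhile id xs") auto
  have xs1: "xs = replicate a True @ False # r1"
    using takeWhile_dropWhile_id[of id xs] tw r1 by simp
  have a1: "a \<ge> 1"
  proof (rule ccontr)
    assume "\<not> a \<ge> 1"
    then have "a = 0" by simp
    then have "nn 0 (False # r1)" using nn0 xs1 by simp
    then show False by (auto dest: nn_nonneg)
  qed
  define b where "b = length (takeWhile Not (rev xs))"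
  have tw2: "takeWhile Not (rev xs) = replicate b False"
    unfolding b_def by (rule replicate_eqI) (auto dest: set_takeWhileD)
  have dwne2: "dropWhile Not (rev xs) \<noteq> []"
  proof
    assume e: "dropWhile Not (rev xs) = []"
    have "rev xs = takeWhile Not (rev xs) @ dropWhile Not (rev xs)" by (rule takeWhile_dropWhile_id[symmetric])
    also have "\<dots> = replicate b False" by (simp only: e tw2 append_Nil2)
    finally have "rev xs = replicate b False" .
    then have "xs = replicate b False" by (metis rev_replicate rev_rev_ident)
    then show False using h0 len n by simp
  qed
  then obtain r2 where r2: "dropWhile Not (rev xs) = True # r2"
    using hd_dropWhile[OF dwne2] by (cases "dropWhile Not (rev xs)") auto
  have "rev xs = replicate b False @ True # r2"
    using takeWhile_dropWhile_id[of Not "rev xs"] tw2 r2 by simp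
  then have xs2: "xs = rev r2 @ True # replicate b False"
    by (metis rev_rev_ident rev_append rev_replicate append_assoc rev.simps(2) append.left_neutral append_Cons)
  have b1: "b \<ge> 1"
  proof (rule ccontr)
    assume "\<not> b \<ge> 1"
    then have "b = 0" by simp
    then have xs3: "xs = rev r2 @ [True]" using xs2 by simp
    then have "nn 0 (rev r2)" using nn0 by (simp add: nn_append)
    then have "0 \<le> height (rev r2)" using nn_end by fastforce
    moreover have "height (rev r2) = -1" using h0 xs3 by simp
    ultimately show False by simp
  qed
  have fa: "first_peak_height xs = int a" using first_peak[OF xs1 a1] .
  have lb: "last_peak_height xs = int b" using last_peak[OF xs2 b1] h0 by simp
  have sab: "s = a + b" using fl fa lb by simp
  define M where "M = drop (Suc a) (rev r2)"
  have lr2: "length (rev r2) = 2 * n - b - 1" using xs2 len by simp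
  have "Suc a \<le> length (rev r2)" using lr2 sab s n by simp
  then have r1M: "r1 = M @ True # replicate b False"
  proof -
    assume le: "Suc a \<le> length (rev r2)"
    have "r1 = drop (Suc a) xs" using xs1 by simp
    also have "\<dots> = drop (Suc a) (rev r2) @ True # replicate b False" using xs2 le by simp
    finally show ?thesis unfolding M_def .
  qed
  have xs4: "xs = replicate a True @ False # M @ True # replicate b False" using xs1 r1M by simp
  have lenM: "length M = 2 * n - s - 2" unfolding M_def using lr2 sab by simp
  have "nn (int a) (False # M @ True # replicate b False)"
    using nn0 unfolding xs4 nn_append by simp
  then have "nn (int a - 1) (M @ True # replicate b False)" by simp
  then have nnM: "nn (int (a - 1)) M" using a1 unfolding nn_append by (simp add: of_nat_diff)
  have hM: "int (a - 1) + height M = int (s - a - 1)"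
    using h0 xs4 a1 b1 sab by (simp add: of_nat_diff)
  have "M \<in> NP (2 * n - s - 2) (a - 1) (s - a - 1)"
    unfolding NP_def using lenM nnM hM by simp
  then have "xs \<in> T n s a" unfolding T_def using xs4 sab by auto
  moreover have "a \<in> {1..<s}" using a1 b1 sab by simp
  ultimately show ?thesis by blast
qed

theorem proposition3p4:
  fixes n s :: nat
  assumes "n \<ge> 2" and "s \<le> 2 * n - 2"
  shows "int (card {xs. dyck_path n xs \<and>
                      first_peak_height xs + last_peak_height xs = int s})
         = (\<Sum>j = 1..s div 2. (-1) ^ (j - 1) * int j * int ((s - j) choose j)
                               * int (catalan (n - 1 - j)))"
proof -
  have eq: "{xs. dyck_path n xs \<and> first_peak_height xs + last_peak_height xs = int s}
      = (\<Union>a\<in>{1..<s}. T n s a)"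
    using S_sub[OF assms] T_sub[OF assms] by blast
  have "card (\<Union>a\<in>{1..<s}. T n s a) = (\<Sum>a\<in>{1..<s}. card (T n s a))"
  proof (rule card_UN_disjoint)
    show "finite {1..<s}" by simp
    show "\<forall>i\<in>{1..<s}. finite (T n s i)" unfolding T_def by (simp add: NP_finite)
    show "\<forall>i\<in>{1..<s}. \<forall>j\<in>{1..<s}. i \<noteq> j \<longrightarrow> T n s i \<inter> T n s j = {}"
      using T_disj[OF assms] by blast
  qed
  then have "card {xs. dyck_path n xs \<and> first_peak_height xs + last_peak_height xs = int s}
      = (\<Sum>a\<in>{1..<s}. W (2 * n - s - 2) (a - 1) (s - a - 1))"
    unfolding eq card_T .
  then show ?thesis using alg_final[OF assms] by simp
qed


end
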